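(* Let $m,N\ge1$, let $d$ be a positive divisor of $m$, and let $\chi$ be a Dirichlet character modulo $N$ with conductor $N_\chi$. Define $$\Sigma(N,m,d) = \sum_{\tau}\phi(\gcd(\tau,N/\tau))\,\chi(y_\tau),$$ where $\tau$ runs over positive divisors of $N$ such that $\gcd(\tau,N/\tau)$ divides $\gcd(N/N_\chi,\, d-m/d)$, and $y_\tau$ is an integer (unique modulo $\mathrm{lcm}(\tau,N/\tau)$) with $y_\tau\equiv d \pmod{\tau}$ and $y_\tau\equiv m/d\pmod{N/\tau}$. Then $|\Sigma(N,m,d)|\le \sqrt{N}\,2^{\omega(N)}$ always, and if $d\ne\sqrt m$ then $|\Sigma(N,m,d)|\le |d-m/d|\,2^{\omega(N)}$.
   Context: $\phi$ is Euler's totient function; $\omega(N)$ is the number of distinct prime divisors of $N$; $\gcd(a,0)=a$. *)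

theory Defs
  imports Complex_Main "HOL-Number_Theory.Number_Theory"
begin

definition dirichlet_character :: "nat \<Rightarrow> (int \<Rightarrow> complex) \<Rightarrow> bool" where
  "dirichlet_character N \<chi> \<longleftrightarrow> N \<ge> 1 \<and>
     (\<forall>a b. \<chi> (a * b) = \<chi> a * \<chi> b) \<and>
     (\<forall>a. \<chi> (a + int N) = \<chi> a) \<and>
     (\<forall>a. \<chi> a = 0 \<longleftrightarrow> \<not> coprime a (int N))"

definition induced_modulus :: "nat \<Rightarrow> (int \<Rightarrow> complex) \<Rightarrow> nat \<Rightarrow> bool" where
  "induced_modulus N \<chi> q \<longleftrightarrow> q > 0 \<and> q dvd N \<and>
     (\<forall>a. coprime a (int N) \<and> [a = 1] (mod int q) \<longrightarrow> \<chi> a = 1)"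

definition conductor :: "nat \<Rightarrow> (int \<Rightarrow> complex) \<Rightarrow> nat" where
  "conductor N \<chi> = (LEAST q. induced_modulus N \<chi> q)"

definition omega :: "nat \<Rightarrow> nat" where
  "omega n = card (prime_factors n)"

definition sigma_index :: "nat \<Rightarrow> (int \<Rightarrow> complex) \<Rightarrow> nat \<Rightarrow> nat \<Rightarrow> nat set" where
  "sigma_index N \<chi> m d = {\<tau>. \<tau> > 0 \<and> \<tau> dvd N \<and>
      int (gcd \<tau> (N div \<tau>)) dvd gcd (int (N div conductor N \<chi>)) (int d - int (m div d))}"

end

theory Submission
  imports Defs
begin

lemma chi_periodic:
  assumes "dirichlet_character N \<chi>"
  shows "\<chi> (b + k * int N) = \<chi> b"
proof -
  have per: "\<And>a. \<chi> (a + int N) = \<chi> a" using assms unfolding dirichlet_character_def by blast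
  have pos: "\<chi> (b + int n * int N) = \<chi> b" for n b
  proof (induction n)
    case (Suc n)
    have "\<chi> (b + int (Suc n) * int N) = \<chi> ((b + int n * int N) + int N)" by (simp add: algebra_simps)
    also have "\<dots> = \<chi> (b + int n * int N)" by (rule per)
    also have "\<dots> = \<chi> b" by (rule Suc.IH)
    finally show ?case .
  qed simp
  show ?thesis
  proof (cases "k \<ge> 0")
    case True then show ?thesis using pos[of b "nat k"] by simp
  next
    case False
    then obtain n where k: "k = - int n" by (intro that[of "nat (-k)"]) simp
    have e: "b + k * int N + int n * int N = b" using k by simp
    show ?thesis using pos[of "b + k * int N" n] unfolding e by (rule sym)
  qed
qed

lemma chi_norm_le1:
  assumes "dirichlet_character N \<chi>"
  shows "cmod (\<chi> a) \<le> 1"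
proof (cases "coprime a (int N)")
  case False
  then have "\<chi> a = 0" using assms unfolding dirichlet_character_def by blast
  then show ?thesis by simp
next
  case True
  have N1: "N \<ge> 1" using assms unfolding dirichlet_character_def by blast
  have mult: "\<And>a b. \<chi> (a * b) = \<chi> a * \<chi> b" using assms unfolding dirichlet_character_def by blast
  have z: "\<And>a. \<chi> a = 0 \<longleftrightarrow> \<not> coprime a (int N)" using assms unfolding dirichlet_character_def by blast
  have c1: "\<chi> 1 = 1"
  proof -
    have "\<chi> 1 = \<chi> 1 * \<chi> 1" using mult[of 1 1] by simp
    moreover have "\<chi> 1 \<noteq> 0" using z by simp
    ultimately show ?thesis by simp
  qed
  have pow: "\<chi> (x ^ n) = \<chi> x ^ n" for x n by (induction n) (simp_all add: mult c1)
  have modeq: "\<chi> x = \<chi> (x mod int N)" for x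
    using chi_periodic[OF assms, of "x mod int N" "x div int N"] by simp
  define b where "b = nat (a mod int N)"
  have bdef: "int b = a mod int N" using N1 unfolding b_def by simp
  have cb: "coprime b N" using True bdef
    by (metis True bdef modeq coprime_int_iff z)
  have "[b ^ totient N = 1] (mod N)" using euler_theorem[OF cb] .
  hence "int (b ^ totient N) mod int N = 1 mod int N"
    by (metis cong_def of_nat_1 zmod_int)
  hence "\<chi> (int b ^ totient N) = \<chi> 1" using modeq by (metis of_nat_power)
  hence "\<chi> a ^ totient N = 1" using pow c1 modeq bdef by simp
  hence "cmod (\<chi> a) ^ totient N = 1" by (metis norm_one norm_power)
  moreover have "totient N > 0" using N1 by simp
  ultimately have "cmod (\<chi> a) = 1"
    using power_eq_1_iff by fastforce
  then show ?thesis by simp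
qed

lemma count_tau:
  fixes N e :: nat
  assumes "N > 0"
  shows "card {\<tau>. \<tau> dvd N \<and> gcd \<tau> (N div \<tau>) = e} \<le> 2 ^ omega N"
proof -
  define f where "f \<tau> = {p \<in> prime_factors N. multiplicity p (N div \<tau>) < multiplicity p \<tau>}" for \<tau>
  define A where "A = {\<tau>. \<tau> dvd N \<and> gcd \<tau> (N div \<tau>) = e}"
  have key: "multiplicity p t = (if p \<in> f t then multiplicity p N - multiplicity p e else multiplicity p e)"
    if tA: "t \<in> A" and p: "prime p" for t p
  proof -
    define s where "s = N div t"
    have tN: "t dvd N" and ge: "gcd t s = e" using tA unfolding A_def s_def by auto
    have Nts: "N = t * s" using tN unfolding s_def by simp
    have t0: "t \<noteq> 0" and s0: "s \<noteq> 0" using Nts assms by auto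
    have m: "multiplicity p N = multiplicity p t + multiplicity p s"
      using Nts prime_elem_multiplicity_mult_distrib[of p t s] p t0 s0 by simp
    have g: "multiplicity p e = min (multiplicity p t) (multiplicity p s)"
      using multiplicity_gcd[OF t0 s0 p] ge by simp
    show ?thesis
    proof (cases "p \<in> prime_factors N")
      case True
      then have "p \<in> f t \<longleftrightarrow> multiplicity p s < multiplicity p t" unfolding f_def s_def by simp
      then show ?thesis using m g by auto
    next
      case False
      then have "\<not> p dvd N" using p assms by (simp add: in_prime_factors_iff)
      then have "multiplicity p N = 0" by (simp add: not_dvd_imp_multiplicity_0)
      moreover have "p \<notin> f t" using False unfolding f_def by simp
      ultimately show ?thesis using m g by simp
    qed
  qed
  have inj: "inj_on f A"
  proof (rule inj_onI)
    fix t1 t2 assume t1: "t1 \<in> A" and t2: "t2 \<in> A" and eq: "f t1 = f t2"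
    have "t1 \<noteq> 0" "t2 \<noteq> 0" using t1 t2 assms unfolding A_def by auto
    moreover have "multiplicity p t1 = multiplicity p t2" if "prime p" for p
      using key[OF t1 that] key[OF t2 that] eq by simp
    ultimately show "t1 = t2" using multiplicity_eq_imp_eq[of t1 t2] by simp
  qed
  have sub: "f ` A \<subseteq> Pow (prime_factors N)" unfolding f_def by auto
  have "card A = card (f ` A)" using card_image[OF inj] by simp
  also have "\<dots> \<le> card (Pow (prime_factors N))" by (rule card_mono[OF _ sub]) simp
  also have "\<dots> = 2 ^ omega N" unfolding omega_def by (simp add: card_Pow)
  finally show ?thesis unfolding A_def .
qed

lemma sqrt_part:
  fixes N :: nat
  assumes "N > 0"
  shows "\<exists>r>0. r * r \<le> N \<and> (\<forall>e. e * e dvd N \<longrightarrow> e dvd r)"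
proof -
  define E where "E = {e. e * e dvd N}"
  have finE: "finite E"
  proof (rule finite_subset[of _ "{..N}"])
    show "E \<subseteq> {..N}"
    proof
      fix e assume "e \<in> E"
      then have "e * e dvd N" unfolding E_def by simp
      then have "e * e \<le> N" using assms by (simp add: dvd_imp_le)
      moreover have "e \<le> e * e" by (cases e) auto
      ultimately show "e \<in> {..N}" by (meson atMost_iff le_trans)
    qed
  qed simp
  have oneE: "1 \<in> E" unfolding E_def by simp
  define r where "r = Max E"
  have rE: "r \<in> E" unfolding r_def using finE oneE by (intro Max_in) auto
  have lcmsq: "lcm a b * lcm a b = lcm (a * a) (b * b)" for a b :: nat
  proof -
    have "gcd (a*a) (b*b) = gcd a b * gcd a b" using gcd_exp[of a 2 b] by (simp add: power2_eq_square)
    moreover have "(a*a)*(b*b) = gcd (a*a) (b*b) * lcm (a*a) (b*b)" by (rule prod_gcd_lcm_nat)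
    moreover have "a*b = gcd a b * lcm a b" by (rule prod_gcd_lcm_nat)
    ultimately have "gcd a b * gcd a b * (lcm a b * lcm a b) = gcd a b * gcd a b * lcm (a * a) (b * b)"
      by (metis mult.assoc mult.left_commute)
    then show ?thesis
      by (cases "gcd a b = 0") auto
  qed
  have all: "e dvd r" if "e * e dvd N" for e
  proof -
    have rr: "r * r dvd N" using rE unfolding E_def by simp
    have "lcm e r * lcm e r dvd N" unfolding lcmsq using that rr by simp
    then have "lcm e r \<in> E" unfolding E_def by simp
    then have le: "lcm e r \<le> r" unfolding r_def using finE by simp
    have r0: "r \<noteq> 0" using rr assms by auto
    have "e \<noteq> 0" using that assms by auto
    then have "lcm e r > 0" using r0 by (simp add: lcm_pos_nat)
    moreover have "r dvd lcm e r" by simp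
    ultimately have "lcm e r = r" using le dvd_imp_le[of r "lcm e r"] by linarith
    then show ?thesis by (metis dvd_lcm1)
  qed
  have "r * r \<le> N" using rE assms unfolding E_def by (simp add: dvd_imp_le)
  moreover have "r > 0" using rE assms unfolding E_def by (auto intro: Nat.gr0I)
  ultimately show ?thesis using all by blast
qed

lemma sum_bound:
  fixes N B :: nat and S :: "nat set"
  assumes N: "N > 0" and S: "S \<subseteq> {\<tau>. \<tau> dvd N}" and dv: "\<And>\<tau>. \<tau> \<in> S \<Longrightarrow> gcd \<tau> (N div \<tau>) dvd B"
    and B: "B > 0"
  shows "(\<Sum>\<tau>\<in>S. totient (gcd \<tau> (N div \<tau>))) \<le> 2 ^ omega N * B"
proof -
  define g where "g \<tau> = gcd \<tau> (N div \<tau>)" for \<tau>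
  have finS: "finite S" by (rule finite_subset[OF S]) (use N in simp)
  have "(\<Sum>\<tau>\<in>S. totient (g \<tau>)) = (\<Sum>e\<in>g ` S. \<Sum>\<tau>\<in>{\<tau>. \<tau> \<in> S \<and> g \<tau> = e}. totient (g \<tau>))"
    by (rule sum.image_gen[OF finS])
  also have "\<dots> = (\<Sum>e\<in>g ` S. card {\<tau>. \<tau> \<in> S \<and> g \<tau> = e} * totient e)"
    by (intro sum.cong refl) simp
  also have "\<dots> \<le> (\<Sum>e\<in>g ` S. 2 ^ omega N * totient e)"
  proof (intro sum_mono mult_right_mono)
    fix e
    have "{\<tau>. \<tau> \<in> S \<and> g \<tau> = e} \<subseteq> {\<tau>. \<tau> dvd N \<and> gcd \<tau> (N div \<tau>) = e}" using S unfolding g_def by auto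
    then have "card {\<tau>. \<tau> \<in> S \<and> g \<tau> = e} \<le> card {\<tau>. \<tau> dvd N \<and> gcd \<tau> (N div \<tau>) = e}"
      by (rule card_mono[rotated]) (rule finite_subset[of _ "{\<tau>. \<tau> dvd N}"], auto simp: N)
    then show "card {\<tau>. \<tau> \<in> S \<and> g \<tau> = e} \<le> 2 ^ omega N" using count_tau[OF N, of e] by linarith
  qed simp
  also have "\<dots> = 2 ^ omega N * (\<Sum>e\<in>g ` S. totient e)" by (simp add: sum_distrib_left)
  also have "\<dots> \<le> 2 ^ omega N * (\<Sum>e | e dvd B. totient e)"
  proof (intro mult_left_mono sum_mono2)
    show "finite {e. e dvd B}" using B by simp
    show "g ` S \<subseteq> {e. e dvd B}" using dv unfolding g_def by auto
  qed auto
  also have "\<dots> = 2 ^ omega N * B" by (simp add: totient_divisor_sum)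
  finally show ?thesis unfolding g_def .
qed


theorem lemma3p3:
  fixes N m d :: nat and \<chi> :: "int \<Rightarrow> complex" and y :: "nat \<Rightarrow> int"
  assumes "m \<ge> 1" and "N \<ge> 1" and "d > 0" and "d dvd m"
    and "dirichlet_character N \<chi>"
    and y: "\<And>\<tau>. \<tau> \<in> sigma_index N \<chi> m d \<Longrightarrow>
              [y \<tau> = int d] (mod int \<tau>) \<and> [y \<tau> = int (m div d)] (mod int (N div \<tau>))"
  defines "\<Sigma> \<equiv> (\<Sum>\<tau>\<in>sigma_index N \<chi> m d. of_nat (totient (gcd \<tau> (N div \<tau>))) * \<chi> (y \<tau>))"
  shows "cmod \<Sigma> \<le> sqrt (real N) * 2 ^ omega N \<and>
         (real d \<noteq> sqrt (real m) \<longrightarrow>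
           cmod \<Sigma> \<le> \<bar>real_of_int (int d - int (m div d))\<bar> * 2 ^ omega N)"
proof -
  define S where "S = sigma_index N \<chi> m d"
  have N0: "N > 0" using assms by simp
  have SN: "S \<subseteq> {\<tau>. \<tau> dvd N}" unfolding S_def sigma_index_def by auto
  have finS: "finite S" by (rule finite_subset[OF SN]) (use N0 in simp)
  define T where "T = (\<Sum>\<tau>\<in>S. totient (gcd \<tau> (N div \<tau>)))"
  have "cmod \<Sigma> \<le> (\<Sum>\<tau>\<in>S. cmod (of_nat (totient (gcd \<tau> (N div \<tau>))) * \<chi> (y \<tau>)))"
    unfolding \<Sigma>_def S_def by (rule norm_sum)
  also have "\<dots> \<le> (\<Sum>\<tau>\<in>S. real (totient (gcd \<tau> (N div \<tau>))))"
  proof (rule sum_mono)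
    fix \<tau>
    have "cmod (\<chi> (y \<tau>)) \<le> 1" by (rule chi_norm_le1[OF assms(5)])
    then show "cmod (of_nat (totient (gcd \<tau> (N div \<tau>))) * \<chi> (y \<tau>)) \<le> real (totient (gcd \<tau> (N div \<tau>)))"
      by (simp add: norm_mult mult_left_le)
  qed
  also have "\<dots> = real T" unfolding T_def by simp
  finally have ST: "cmod \<Sigma> \<le> real T" .
  obtain r where r0: "r > 0" and rN: "r * r \<le> N" and rdv: "\<And>e. e * e dvd N \<Longrightarrow> e dvd r"
    using sqrt_part[OF N0] by blast
  have "T \<le> 2 ^ omega N * r" unfolding T_def
  proof (rule sum_bound[OF N0 SN _ r0])
    fix \<tau> assume "\<tau> \<in> S"
    then have tN: "\<tau> dvd N" using SN by auto
    have "gcd \<tau> (N div \<tau>) * gcd \<tau> (N div \<tau>) dvd \<tau> * (N div \<tau>)" by (intro mult_dvd_mono) auto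
    also have "\<tau> * (N div \<tau>) = N" using tN by simp
    finally show "gcd \<tau> (N div \<tau>) dvd r" by (rule rdv)
  qed
  then have "real T \<le> real (2 ^ omega N * r)" by (simp only: of_nat_le_iff)
  then have Tr: "real T \<le> 2 ^ omega N * real r" by simp
  have rs: "real r \<le> sqrt (real N)"
    using rN by (intro real_le_rsqrt) (simp add: power2_eq_square flip: of_nat_mult)
  have rs2: "2 ^ omega N * real r \<le> 2 ^ omega N * sqrt (real N)" using rs by (intro mult_left_mono) auto
  have first: "cmod \<Sigma> \<le> sqrt (real N) * 2 ^ omega N"
    using ST Tr rs2 by (simp only: mult.commute[of "sqrt (real N)"])
  have second: "cmod \<Sigma> \<le> \<bar>real_of_int (int d - int (m div d))\<bar> * 2 ^ omega N"
    if ne: "real d \<noteq> sqrt (real m)"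
  proof -
    define B where "B = nat \<bar>int d - int (m div d)\<bar>"
    have "d \<noteq> m div d"
    proof
      assume "d = m div d"
      then have "m = d * d" using assms(4) by (metis dvd_mult_div_cancel)
      then have "sqrt (real m) = real d" by (simp add: real_sqrt_mult)
      then show False using ne by simp
    qed
    then have B0: "B > 0" unfolding B_def by simp
    have BT: "T \<le> 2 ^ omega N * B" unfolding T_def
    proof (rule sum_bound[OF N0 SN _ B0])
      fix \<tau> assume "\<tau> \<in> S"
      then have "int (gcd \<tau> (N div \<tau>)) dvd gcd (int (N div conductor N \<chi>)) (int d - int (m div d))"
        unfolding S_def sigma_index_def by auto
      then have "int (gcd \<tau> (N div \<tau>)) dvd (int d - int (m div d))" using dvd_trans gcd_dvd2 by blast
      then have "int (gcd \<tau> (N div \<tau>)) dvd int B" unfolding B_def by simp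
      then show "gcd \<tau> (N div \<tau>) dvd B" by (simp only: of_nat_dvd_iff)
    qed
    have "real B = \<bar>real_of_int (int d - int (m div d))\<bar>" unfolding B_def by simp
    moreover have "real T \<le> real (2 ^ omega N * B)"
      using BT by (simp only: of_nat_le_iff)
    then have "real T \<le> 2 ^ omega N * real B" by simp
    ultimately have "real T \<le> \<bar>real_of_int (int d - int (m div d))\<bar> * 2 ^ omega N"
      by (simp add: mult.commute)
    then show ?thesis using ST by linarith
  qed
  show ?thesis using first second by blast
qed

end
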